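(* Assume the following statement holds: for every base $b>2$, every integer $n$ with $1<n<b$, and every symmetric $(n,b)$-palintiple with carries $c_k,\ldots,c_0$, one has $c_j\equiv 0 \pmod{n-1}$ for all $0\le j\le k$. Then, for integers $b>2$ and $1<n<b$, an $(n,b)$-palintiple is asymmetric if and only if $\gcd(b-n,n^2-1)\le n-1$ and $n+1$ does not divide $b$.
   Context: Let $b>2$ be an integer base and write $(d_k,d_{k-1},\ldots,d_0)_b=\sum_{j=0}^k d_j b^j$ with $0\le d_j<b$. A natural number $p=(d_k,\ldots,d_0)_b$ with $d_k\neq 0$ and $d_0\neq 0$ that is not a base-$b$ palindrome is an $(n,b)$-palintiple if $(d_k,\ldots,d_0)_b=n\,(d_0,d_1,\ldots,d_k)_b$ for an integer $n$ with $1<n<b$. Its carries $c_0,\ldots,c_{k+1}$ are the carries arising in the base-$b$ multiplication of $(d_0,\ldots,d_k)_b$ by $n$: $c_0=0$ and $n d_{k-j}+c_j=d_j+b\,c_{j+1}$ for $0\le j\le k$ (so $c_{k+1}=0$). The palintiple is symmetric if $c_j=c_{k-j}$ for all $0\le j\le k$, shifted-symmetric if $c_j=c_{k-j+1}$ for all $0\le j\le k$, and asymmetric if it is neither symmetric nor shifted-symmetric. *)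

theory Defs
  imports Main
begin

text \<open>A base-b digit string (d_k,...,d_0) is represented by k and a function d (d j = d_j).\<close>

definition num :: "nat \<Rightarrow> nat \<Rightarrow> (nat \<Rightarrow> nat) \<Rightarrow> nat" where
  "num b k d = (\<Sum>j\<le>k. d j * b ^ j)"

definition palintiple :: "nat \<Rightarrow> nat \<Rightarrow> nat \<Rightarrow> (nat \<Rightarrow> nat) \<Rightarrow> bool" where
  "palintiple n b k d \<longleftrightarrow>
     1 < n \<and> n < b \<and> (\<forall>j\<le>k. d j < b) \<and> d k \<noteq> 0 \<and> d 0 \<noteq> 0 \<and>
     (\<exists>j\<le>k. d j \<noteq> d (k - j)) \<and>
     num b k d = n * num b k (\<lambda>j. d (k - j))"

text \<open>Carries of the base-b multiplication of (d_0,...,d_k)_b by n: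
  c_0 = 0, n d_(k-j) + c_j = d_j + b c_(j+1).\<close>
fun carry :: "nat \<Rightarrow> nat \<Rightarrow> nat \<Rightarrow> (nat \<Rightarrow> nat) \<Rightarrow> nat \<Rightarrow> nat" where
  "carry n b k d 0 = 0"
| "carry n b k d (Suc j) = (n * d (k - j) + carry n b k d j) div b"

definition symmetric_pal :: "nat \<Rightarrow> nat \<Rightarrow> nat \<Rightarrow> (nat \<Rightarrow> nat) \<Rightarrow> bool" where
  "symmetric_pal n b k d \<longleftrightarrow> (\<forall>j\<le>k. carry n b k d j = carry n b k d (k - j))"

definition shifted_symmetric_pal :: "nat \<Rightarrow> nat \<Rightarrow> nat \<Rightarrow> (nat \<Rightarrow> nat) \<Rightarrow> bool" where
  "shifted_symmetric_pal n b k d \<longleftrightarrow> (\<forall>j\<le>k. carry n b k d j = carry n b k d (k - j + 1))"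

definition asymmetric_pal :: "nat \<Rightarrow> nat \<Rightarrow> nat \<Rightarrow> (nat \<Rightarrow> nat) \<Rightarrow> bool" where
  "asymmetric_pal n b k d \<longleftrightarrow> \<not> symmetric_pal n b k d \<and> \<not> shifted_symmetric_pal n b k d"

end

theory Submission
  imports Defs
begin

lemma carry_lt:
  assumes "\<forall>j\<le>k. d j < b" "0 < n"
  shows "carry n b k d j < n"
proof (induction j)
  case 0 then show ?case using assms by simp
next
  case (Suc j)
  have "d (k-j) < b" using assms by simp
  then have "d (k-j) \<le> b - 1" by simp
  then have "n * d (k-j) \<le> n * (b - 1)" by simp
  moreover have "n * (b-1) + n = n * b" using \<open>d (k-j) < b\<close>
    by (metis Suc_diff_1 gr_implies_not0 mult_Suc_right nat_neq_iff add.commute)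
  ultimately have "n * d (k-j) + carry n b k d j < n * b" using Suc by linarith
  then show ?case by (simp add: less_mult_imp_div_less mult.commute)
qed

lemma sum_lt:
  assumes "\<forall>i\<le>k. e i < (b::nat)"
  shows "(\<Sum>i\<le>k. e i * b^i) < b ^ Suc k"
  using assms
proof (induction k)
  case 0 then show ?case by simp
next
  case (Suc k)
  have A: "(\<Sum>i\<le>k. e i * b^i) < b ^ Suc k" using Suc by simp
  have "e (Suc k) + 1 \<le> b" using Suc.prems by (simp add: Suc_le_eq)
  then have "(e (Suc k) + 1) * b ^ Suc k \<le> b * b ^ Suc k" by (rule mult_right_mono) simp
  then show ?case using A by (simp add: algebra_simps)
qed

lemma uniq:
  assumes "\<forall>i\<le>k. e i < (b::nat)" "\<forall>i\<le>k. f i < b"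
    "(\<Sum>i\<le>k. e i * b^i) = (\<Sum>i\<le>k. f i * b^i)" "i \<le> k"
  shows "e i = f i"
  using assms
proof (induction k arbitrary: i)
  case 0 then show ?case by simp
next
  case (Suc k)
  define A where "A = (\<Sum>i\<le>k. e i * b^i)"
  define A' where "A' = (\<Sum>i\<le>k. f i * b^i)"
  define B where "B = b ^ Suc k"
  have AB: "A < B" unfolding A_def B_def using Suc.prems by (intro sum_lt) simp
  have AB': "A' < B" unfolding A'_def B_def using Suc.prems by (intro sum_lt) simp
  have eq: "A + e (Suc k) * B = A' + f (Suc k) * B"
    using Suc.prems(3) unfolding A_def A'_def B_def by simp
  have "(A + e (Suc k) * B) mod B = A" using AB by simp
  moreover have "(A' + f (Suc k) * B) mod B = A'" using AB' by simp
  ultimately have AA: "A = A'" using eq by simp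
  have "(A + e (Suc k) * B) div B = e (Suc k)" using AB by simp
  moreover have "(A' + f (Suc k) * B) div B = f (Suc k)" using AB' by simp
  ultimately have ef: "e (Suc k) = f (Suc k)" using eq by simp
  show ?case
  proof (cases "i = Suc k")
    case True then show ?thesis using ef by simp
  next
    case False
    then have "i \<le> k" using Suc.prems by simp
    then show ?thesis using Suc.IH[of i] Suc.prems AA unfolding A_def A'_def by simp
  qed
qed

lemma aux: "((q::nat) * b + r) * B = r * B + q * (b * B)"
  by (simp add: algebra_simps)

lemma mult_repr:
  "n * (\<Sum>i<J. d (k-i) * b^i) =
     (\<Sum>i<J. ((n * d (k-i) + carry n b k d i) mod b) * b^i) + carry n b k d J * b^J"
proof (induction J)
  case 0 then show ?case by simp
next
  case (Suc J)
  define x where "x = n * d (k-J) + carry n b k d J"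
  define S where "S = (\<Sum>i<J. d (k-i) * b^i)"
  define E where "E = (\<Sum>i<J. ((n * d (k-i) + carry n b k d i) mod b) * b^i)"
  have IH: "n * S = E + carry n b k d J * b^J" using Suc unfolding S_def E_def .
  have 1: "n * (\<Sum>i<Suc J. d (k-i) * b^i) = n * S + n * d (k-J) * b^J"
    unfolding S_def by (simp add: distrib_left mult.assoc)
  have 2: "(\<Sum>i<Suc J. ((n * d (k-i) + carry n b k d i) mod b) * b^i) = E + (x mod b) * b^J"
    unfolding E_def x_def by simp
  have 3: "x * b^J = (x mod b) * b^J + (x div b) * b^Suc J"
  proof -
    have "x = x div b * b + x mod b" by simp
    then have "x * b^J = (x div b * b + x mod b) * b^J" by (rule arg_cong)
    also have "\<dots> = (x mod b) * b^J + (x div b) * (b * b^J)" by (rule aux)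
    finally show ?thesis by simp
  qed
  have 4: "carry n b k d (Suc J) = x div b" unfolding x_def by simp
  have "n * (\<Sum>i<Suc J. d (k-i) * b^i) = E + x * b^J"
    unfolding 1 IH x_def by (simp add: algebra_simps)
  then show ?case unfolding 2 4 3 by simp
qed

lemma digit_id:
  assumes p: "palintiple n b k d"
  shows "\<forall>j\<le>k. d j + b * carry n b k d (Suc j) = n * d (k-j) + carry n b k d j"
    and "carry n b k d (Suc k) = 0"
proof -
  let ?c = "carry n b k d"
  define e where "e i = (n * d (k-i) + ?c i) mod b" for i
  have dl: "\<forall>j\<le>k. d j < b" and nb: "n < b" and n1: "1 < n"
    and eqn: "num b k d = n * num b k (\<lambda>j. d (k - j))"
    using p unfolding palintiple_def by auto
  have "num b k (\<lambda>j. d (k - j)) = (\<Sum>i<Suc k. d (k-i) * b^i)"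
    unfolding num_def by (simp add: lessThan_Suc_atMost)
  then have R: "num b k d = (\<Sum>i\<le>k. e i * b^i) + ?c (Suc k) * b ^ Suc k"
    using eqn mult_repr[where n=n and J="Suc k" and d=d and k=k and b=b] unfolding e_def by (simp add: lessThan_Suc_atMost)
  have "num b k d < b ^ Suc k" unfolding num_def using dl by (intro sum_lt) simp
  have c0: "?c (Suc k) = 0"
  proof (rule ccontr)
    assume "?c (Suc k) \<noteq> 0"
    then have "1 * b ^ Suc k \<le> ?c (Suc k) * b ^ Suc k" by (intro mult_right_mono) auto
    then show False using R \<open>num b k d < b ^ Suc k\<close> by linarith
  qed
  then show "?c (Suc k) = 0" .
  have el: "\<forall>i\<le>k. e i < b" unfolding e_def using nb by simp
  have de: "\<forall>j\<le>k. d j = e j"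
  proof (intro allI impI)
    fix j assume "j \<le> k"
    show "d j = e j"
      by (rule uniq[OF dl el _ \<open>j\<le>k\<close>]) (use R c0 in \<open>simp add: num_def\<close>)
  qed
  show "\<forall>j\<le>k. d j + b * ?c (Suc j) = n * d (k-j) + ?c j"
  proof (intro allI impI)
    fix j assume "j \<le> k"
    then have "d j = e j" using de by blast
    then have "d j = (n * d (k-j) + ?c j) mod b" unfolding e_def .
    moreover have "?c (Suc j) = (n*d(k-j) + ?c j) div b" by simp
    ultimately show "d j + b * ?c (Suc j) = n * d (k-j) + ?c j" by (metis mod_mult_div_eq)
  qed
qed


lemma small_dvd_zero:
  fixes x :: int
  assumes "m dvd x" "\<bar>x\<bar> < m"
  shows "x = 0"
  using assms dvd_imp_le_int by force

lemma caseB: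
  assumes DI: "\<forall>j\<le>k. d j + b * c (Suc j) = n * d (k-j) + c j"
    and CL: "\<forall>j. c j < (n::nat)" and dv: "(n+1) dvd b" and j: "j \<le> k"
  shows "c j = c (k-j)"
proof -
  have e1: "d j + b * c (Suc j) = n * d (k-j) + c j" using DI j by simp
  have e2: "d (k-j) + b * c (Suc (k-j)) = n * d j + c (k-j)"
    using DI[rule_format, of "k-j"] j by simp
  have e1': "int (d j) + int b * int (c (Suc j)) = int n * int (d (k-j)) + int (c j)"
    using arg_cong[OF e1, of int] by simp
  have e2': "int (d (k-j)) + int b * int (c (Suc (k-j))) = int n * int (d j) + int (c (k-j))"
    using arg_cong[OF e2, of int] by simp
  obtain t where t: "b = (n+1) * t" using dv by blast
  have tb: "int b = (int n + 1) * int t" using t by (simp add: algebra_simps)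
  have "int (c j) - int (c (k-j)) = (int n + 1) * (int (d j) - int (d (k-j))
        + int t * (int (c (Suc j)) - int (c (Suc (k-j)))))"
    using e1' e2' unfolding tb by (simp add: algebra_simps)
  then have "(int n + 1) dvd (int (c j) - int (c (k-j)))" by simp
  moreover have "\<bar>int (c j) - int (c (k-j))\<bar> < int n + 1" using CL[rule_format, of j] CL[rule_format, of "k-j"] by simp
  ultimately show ?thesis using small_dvd_zero by fastforce
qed

lemma caseA:
  assumes DI: "\<forall>j\<le>k. d j + b * c (Suc j) = n * d (k-j) + c j"
    and CL: "\<forall>j. c j < (n::nat)" and c0: "c 0 = 0" and ck: "c (Suc k) = 0"
    and g: "n \<le> gcd (b-n) (n^2-1)" and nb: "n < b" and n1: "1 < n"
  shows "\<forall>j\<le>k. c j = c (k-j+1)"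
proof -
  define G where "G = int (gcd (b-n) (n^2-1))"
  have "int (gcd (b-n) (n^2-1)) dvd int (b-n)" by (simp only: int_dvd_int_iff) simp
  then have Gb: "G dvd int b - int n" unfolding G_def using nb by (simp add: of_nat_diff)
  have h1: "int (gcd (b-n) (n^2-1)) dvd int (n^2-1)" by (simp only: int_dvd_int_iff) simp
  have h2: "int (n^2-1) = int n ^ 2 - 1" using n1 by (simp add: of_nat_diff)
  have Gm: "G dvd int n ^ 2 - 1" unfolding G_def using h1 h2 by metis
  define \<delta> where "\<delta> j = int (c j) - int (c (Suc k - j))" for j
  have D: "\<forall>j\<le>Suc k. G dvd \<delta> j"
  proof (intro allI impI)
    fix j assume "j \<le> Suc k"
    then show "G dvd \<delta> j"
    proof (induction j)
      case 0 then show ?case using c0 ck by (simp add: \<delta>_def)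
    next
      case (Suc j)
      then have j: "j \<le> k" by simp
      have e1: "d j + b * c (Suc j) = n * d (k-j) + c j" using DI j by simp
      have e2: "d (k-j) + b * c (Suc (k-j)) = n * d j + c (k-j)"
        using DI[rule_format, of "k-j"] j by simp
      have e1': "int (d j) + int b * int (c (Suc j)) = int n * int (d (k-j)) + int (c j)"
        using arg_cong[OF e1, of int] by simp
      have e2': "int (d (k-j)) + int b * int (c (Suc (k-j))) = int n * int (d j) + int (c (k-j))"
        using arg_cong[OF e2, of int] by simp
      have sj: "Suc k - j = Suc (k-j)" "Suc k - Suc j = k - j" using j by auto
      have key: "int n * \<delta> (Suc j) - \<delta> j = - (int b - int n) * (int (c (Suc j)) + int n * int (c (Suc (k-j))))
          + (int n ^ 2 - 1) * (int (d j) - int (c (Suc (k-j))))"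
      proof -
        have cj: "int (c j) = int (d j) + int b * int (c (Suc j)) - int n * int (d (k-j))" using e1' by linarith
        have ckj: "int (c (k-j)) = int (d (k-j)) + int b * int (c (Suc (k-j))) - int n * int (d j)" using e2' by linarith
        show ?thesis unfolding \<delta>_def sj cj ckj by (simp add: algebra_simps power2_eq_square)
      qed
      have "G dvd int n * \<delta> (Suc j) - \<delta> j" unfolding key
        by (intro dvd_add dvd_mult2) (use Gb Gm dvd_diff_commute in auto)
      then have "G dvd int n * \<delta> (Suc j)" using Suc j
        by (metis Suc_leD dvd_diff_commute dvd_add_right_iff diff_add_cancel)
      then have "G dvd int n * (int n * \<delta> (Suc j))" by simp
      moreover have "G dvd (int n ^ 2 - 1) * \<delta> (Suc j)" using Gm by simp
      ultimately have "G dvd int n * (int n * \<delta> (Suc j)) - (int n ^ 2 - 1) * \<delta> (Suc j)" by (rule dvd_diff)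
      moreover have "int n * (int n * \<delta> (Suc j)) - (int n ^ 2 - 1) * \<delta> (Suc j) = \<delta> (Suc j)"
        by (simp add: algebra_simps power2_eq_square)
      ultimately show ?case by simp
    qed
  qed
  show ?thesis
  proof (intro allI impI)
    fix j assume j: "j \<le> k"
    have "G dvd \<delta> j" using D j by simp
    moreover have "\<bar>\<delta> j\<bar> < G" unfolding \<delta>_def G_def
      using CL[rule_format, of j] CL[rule_format, of "Suc k - j"] g by simp
    ultimately have "\<delta> j = 0" by (rule small_dvd_zero)
    then show "c j = c (k-j+1)" unfolding \<delta>_def using j by (simp add: Suc_diff_le)
  qed
qed


lemma sym_imp:
  assumes DI: "\<forall>j\<le>k. d j + b * c (Suc j) = n * d (k-j) + c j"
    and CL: "\<forall>j. c j < (n::nat)" and c0: "c 0 = 0" and ck: "c (Suc k) = 0"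
    and k1: "1 \<le> k" and d0: "d 0 \<noteq> 0" and sym: "\<forall>j\<le>k. c j = c (k-j)"
    and dv: "(n-1) dvd c 1" and n1: "1 < n"
  shows "(n+1) dvd b"
proof -
  have ckz: "c k = 0" using sym[rule_format, of k] c0 by simp
  have e0: "d 0 + b * c 1 = n * d k" using DI[rule_format, of 0] c0 by simp
  have ek: "d k = n * d 0" using DI[rule_format, of k] ck ckz by simp
  have e: "d 0 + b * c 1 = n * (n * d 0)" using e0 ek by simp
  obtain q where q: "c 1 = (n-1) * q" using dv by blast
  have "q = 1"
  proof (rule ccontr)
    assume "q \<noteq> 1"
    then consider "q = 0" | "2 \<le> q" by linarith
    then show False
    proof cases
      case 1
      then have "d 0 = n * (n * d 0)" using e q by simp
      moreover have "2 * d 0 \<le> n * d 0" using n1 by simp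
      moreover have "2 * (n * d 0) \<le> n * (n * d 0)" using n1 by simp
      ultimately show False using d0 by linarith
    next
      case 2
      then have "(n-1) * 2 \<le> (n-1) * q" by simp
      then show False using q CL[rule_format, of 1] n1 by linarith
    qed
  qed
  then have "c 1 = n - 1" using q by simp
  then have "int (d 0) + int b * (int n - 1) = int n * (int n * int (d 0))"
    using arg_cong[OF e, of int] n1 by (simp add: of_nat_diff)
  then have "(int n - 1) * int b = (int n - 1) * ((int n + 1) * int (d 0))"
    by (simp add: algebra_simps)
  then have h: "int b = (int n + 1) * int (d 0)" using n1 by simp
  have "b = (n+1) * d 0" proof -
    have "int b = int ((n+1) * d 0)" using h by (simp add: algebra_simps)
    then show ?thesis by (simp only: of_nat_eq_iff)
  qed
  then show ?thesis by (metis dvd_triv_left)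
qed

lemma shift_imp:
  assumes DI: "\<forall>j\<le>k. d j + b * c (Suc j) = n * d (k-j) + c j"
    and CL: "\<forall>j. c j < (n::nat)" and c0: "c 0 = 0" and ck: "c (Suc k) = 0"
    and d0: "d 0 \<noteq> 0" and sh: "\<forall>j\<le>k. c j = c (k-j+1)"
    and nb: "n < b" and n1: "1 < n"
  shows "n \<le> gcd (b-n) (n^2-1)"
proof (rule ccontr)
  assume "\<not> n \<le> gcd (b-n) (n^2-1)"
  define g where "g = gcd (b-n) (n^2-1)"
  have gl: "g \<le> n - 1" using \<open>\<not> n \<le> gcd (b-n) (n^2-1)\<close> unfolding g_def by simp
  define M where "M = (n^2-1) div g"
  define B where "B = (b-n) div g"
  have cop: "coprime M B" unfolding M_def B_def g_def
    using div_gcd_coprime[of "b-n" "n^2-1"] nb by (simp add: coprime_commute)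
  have gp: "0 < g" unfolding g_def using nb by simp
  have hm: "n^2-1 = g * M" unfolding M_def g_def by simp
  have hb: "b-n = g * B" unfolding B_def g_def by simp
  have Mge: "n + 1 \<le> M"
  proof (rule ccontr)
    assume "\<not> n + 1 \<le> M"
    then have "int M \<le> int n" by simp
    moreover have "int g \<le> int n - 1" using gl n1 by simp
    ultimately have "int g * int M \<le> (int n - 1) * int n"
      by (intro mult_mono) auto
    moreover have "int g * int M = int n ^ 2 - 1"
      using arg_cong[OF hm, of int] n1 by (simp add: of_nat_diff)
    ultimately show False using n1 by (simp add: algebra_simps power2_eq_square)
  qed
  have Z: "\<forall>j\<le>Suc k. c j = 0"
  proof (intro allI impI)
    fix j assume "j \<le> Suc k"
    then show "c j = 0"
    proof (induction j)
      case 0 then show ?case using c0 by simp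
    next
      case (Suc j)
      then have j: "j \<le> k" and cj: "c j = 0" by auto
      have e1: "d j + b * c (Suc j) = n * d (k-j)" using DI j cj by simp
      have s1: "c (Suc (k-j)) = 0" using sh[rule_format, OF j] cj j by (simp add: Suc_diff_le)
      have s2: "c (k-j) = c (Suc j)"
      proof (cases "j < k")
        case True
        then show ?thesis using sh[rule_format, of "Suc j"] by (simp add: Suc_diff_Suc)
      next
        case False
        then show ?thesis using j c0 ck by simp
      qed
      have e2: "d (k-j) = n * d j + c (Suc j)"
        using DI[rule_format, of "k-j"] j s1 s2 by simp
      have "int (d j) + int b * int (c (Suc j)) = int n * (int n * int (d j) + int (c (Suc j)))"
        using arg_cong[OF e1, of int] e2 by simp
      then have "(int n ^ 2 - 1) * int (d j) = (int b - int n) * int (c (Suc j))"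
        by (simp add: algebra_simps power2_eq_square)
      then have "int ((n^2-1) * d j) = int ((b-n) * c (Suc j))"
        using n1 nb by (simp add: of_nat_diff)
      then have "(n^2-1) * d j = (b-n) * c (Suc j)" by (simp only: of_nat_eq_iff)
      then have "g * (M * d j) = g * (B * c (Suc j))" unfolding hm hb by (simp add: mult.assoc)
      then have "M * d j = B * c (Suc j)" using gp by simp
      then have "M dvd B * c (Suc j)" by (metis dvd_triv_left)
      then have "M dvd c (Suc j)" using cop by (simp add: coprime_dvd_mult_right_iff)
      moreover have "c (Suc j) < M" using CL[rule_format, of "Suc j"] Mge by simp
      ultimately show ?case by (metis dvd_imp_le not_le zero_less_iff_neq_zero)
    qed
  qed
  have c1: "c 1 = 0" using Z by simp
  have ckk: "c k = 0" using Z by simp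
  have "d 0 = n * d k" using DI[rule_format, of 0] c0 c1 by simp
  moreover have "d k = n * d 0" using DI[rule_format, of k] ck ckk by simp
  ultimately have "d 0 = n * (n * d 0)" by simp
  moreover have "2 * d 0 \<le> n * d 0" using n1 by simp
  moreover have "2 * (n * d 0) \<le> n * (n * d 0)" using n1 by simp
  ultimately show False using d0 by linarith
qed


theorem corollary2:
  assumes H: "\<forall>b n k d. 2 < b \<and> 1 < n \<and> n < b \<and> palintiple n b k d \<and> symmetric_pal n b k d
                 \<longrightarrow> (\<forall>j\<le>k. (n - 1) dvd carry n b k d j)"
    and b: "2 < (b::nat)" and n1: "1 < n" and nb: "n < b"
    and p: "palintiple n b k d"
  shows "asymmetric_pal n b k d \<longleftrightarrow> gcd (b - n) (n^2 - 1) \<le> n - 1 \<and> \<not> (n + 1) dvd b"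
proof -
  have DI: "\<forall>j\<le>k. d j + b * carry n b k d (Suc j) = n * d (k-j) + carry n b k d j"
    and ck: "carry n b k d (Suc k) = 0" using digit_id[OF p] by auto
  have dl: "\<forall>j\<le>k. d j < b" and d0: "d 0 \<noteq> 0" and np: "\<exists>j\<le>k. d j \<noteq> d (k - j)"
    using p unfolding palintiple_def by auto
  have CL: "\<forall>j. carry n b k d j < n" using carry_lt[OF dl] n1 by simp
  have c0: "carry n b k d 0 = 0" by simp
  have k1: "1 \<le> k"
  proof (rule ccontr)
    assume "\<not> 1 \<le> k"
    then have "k = 0" by simp
    then show False using np by simp
  qed
  have S: "symmetric_pal n b k d \<Longrightarrow> (n+1) dvd b"
  proof -
    assume s: "symmetric_pal n b k d"
    have A: "\<forall>j\<le>k. (n - 1) dvd carry n b k d j" using H b n1 nb p s by blast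
    have "(n-1) dvd carry n b k d 1" using A[rule_format, OF k1] .
    then show ?thesis using sym_imp[OF DI CL c0 ck k1 d0 _ _ n1] s
      unfolding symmetric_pal_def by blast
  qed
  have T: "shifted_symmetric_pal n b k d \<Longrightarrow> n \<le> gcd (b-n) (n^2-1)"
    using shift_imp[OF DI CL c0 ck d0 _ nb n1] unfolding shifted_symmetric_pal_def by blast
  have S': "(n+1) dvd b \<Longrightarrow> symmetric_pal n b k d"
    using caseB[OF DI CL] unfolding symmetric_pal_def by blast
  have T': "n \<le> gcd (b-n) (n^2-1) \<Longrightarrow> shifted_symmetric_pal n b k d"
    using caseA[OF DI CL c0 ck _ nb n1] unfolding shifted_symmetric_pal_def by blast
  show ?thesis unfolding asymmetric_pal_def using S T S' T' n1 by force
qed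

end
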